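(* Let $\mathcal{C}$ be an $(n,k,d)$ linear MDS code over a finite field $\mathbb{F}_q$, and let $d^\perp = n-d+2$. Then $$\rho(\mathcal{C}) \le \frac{\max\{d^\perp, d-1\}}{n}\binom{n}{d-2}.$$
   Context: An $(n,k,d)$ linear MDS code is a linear code over $\mathbb{F}_q$ of length $n$, dimension $k$ and minimum Hamming distance $d = n-k+1$; its dual is MDS with minimum distance $d^\perp = k+1 = n-d+2$. A parity-check matrix for $\mathcal{C}$ is any matrix (possibly with linearly dependent rows) whose rows span $\mathcal{C}^\perp$. For a parity-check matrix $H$, the stopping distance $s(H)$ is the largest integer such that for every set of $s(H)-1$ or fewer columns of $H$, the projection of $H$ onto those columns contains at least one row with exactly one nonzero entry. The stopping redundancy $\rho(\mathcal{C})$ is the smallest number of rows of a parity-check matrix $H$ for $\mathcal{C}$ with $s(H) = d$. *)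

theory Defs
  imports Complex_Main "HOL-Library.Cardinality"
begin

text \<open>Vectors of length n over a field are functions nat => 'a vanishing outside {..<n}.\<close>

definition vecs :: "nat \<Rightarrow> (nat \<Rightarrow> 'a::field) set" where
  "vecs n = {v. \<forall>i\<ge>n. v i = 0}"

definition linear_code :: "nat \<Rightarrow> (nat \<Rightarrow> 'a::field) set \<Rightarrow> bool" where
  "linear_code n C \<longleftrightarrow> C \<subseteq> vecs n \<and> (\<lambda>i. 0) \<in> C \<and>
     (\<forall>u\<in>C. \<forall>v\<in>C. (\<lambda>i. u i + v i) \<in> C) \<and>
     (\<forall>a. \<forall>u\<in>C. (\<lambda>i. a * u i) \<in> C)"

definition code_dim :: "(nat \<Rightarrow> 'a::{finite,field}) set \<Rightarrow> nat \<Rightarrow> bool" where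
  "code_dim C k \<longleftrightarrow> card C = CARD('a) ^ k"

definition hweight :: "nat \<Rightarrow> (nat \<Rightarrow> 'a::field) \<Rightarrow> nat" where
  "hweight n v = card {i. i < n \<and> v i \<noteq> 0}"

text \<open>Minimum Hamming distance of a linear code = minimum weight of a nonzero codeword.\<close>
definition min_dist :: "nat \<Rightarrow> (nat \<Rightarrow> 'a::field) set \<Rightarrow> nat" where
  "min_dist n C = (LEAST w. \<exists>c\<in>C. c \<noteq> (\<lambda>i. 0) \<and> hweight n c = w)"

definition dual_code :: "nat \<Rightarrow> (nat \<Rightarrow> 'a::field) set \<Rightarrow> (nat \<Rightarrow> 'a) set" where
  "dual_code n C = {v \<in> vecs n. \<forall>c\<in>C. (\<Sum>i<n. v i * c i) = 0}"

definition row_span :: "(nat \<Rightarrow> 'a::field) list \<Rightarrow> (nat \<Rightarrow> 'a) set" where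
  "row_span H = {v. \<exists>a. v = (\<lambda>i. \<Sum>j<length H. a j * (H ! j) i)}"

definition parity_check :: "nat \<Rightarrow> (nat \<Rightarrow> 'a::field) set \<Rightarrow> (nat \<Rightarrow> 'a) list \<Rightarrow> bool" where
  "parity_check n C H \<longleftrightarrow> set H \<subseteq> vecs n \<and> row_span H = dual_code n C"

definition has_single_row :: "(nat \<Rightarrow> 'a::field) list \<Rightarrow> nat set \<Rightarrow> bool" where
  "has_single_row H S \<longleftrightarrow> (\<exists>h\<in>set H. card {i\<in>S. h i \<noteq> 0} = 1)"

definition stopping_distance :: "nat \<Rightarrow> (nat \<Rightarrow> 'a::field) list \<Rightarrow> nat" where
  "stopping_distance n H = (GREATEST s. \<forall>S. S \<subseteq> {..<n} \<and> S \<noteq> {} \<and> card S \<le> s - 1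
       \<longrightarrow> has_single_row H S)"

definition stopping_redundancy :: "nat \<Rightarrow> (nat \<Rightarrow> 'a::field) set \<Rightarrow> nat" where
  "stopping_redundancy n C = (LEAST m. \<exists>H. parity_check n C H \<and> length H = m \<and>
       stopping_distance n H = min_dist n C)"

end

theory Submission
  imports Defs "HOL-Library.FuncSet"
begin

definition supp_on :: "nat set \<Rightarrow> (nat \<Rightarrow> 'a::zero) set" where
  "supp_on T = {f. \<forall>i. i \<notin> T \<longrightarrow> f i = 0}"

lemma card_supp_on:
  assumes "finite T"
  shows "card (supp_on T :: (nat \<Rightarrow> 'a::{finite,field}) set) = CARD('a) ^ card T"
proof -
  have "bij_betw (\<lambda>f. restrict f T) (supp_on T :: (nat \<Rightarrow> 'a) set) (PiE T (\<lambda>_. UNIV))"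
  proof (rule bij_betwI[where g="\<lambda>g i. if i \<in> T then g i else 0"])
    show "(\<lambda>f. restrict f T) \<in> (supp_on T :: (nat \<Rightarrow> 'a) set) \<rightarrow> PiE T (\<lambda>_. UNIV)" by auto
    show "(\<lambda>g i. if i \<in> T then g i else 0) \<in> PiE T (\<lambda>_. (UNIV::'a set)) \<rightarrow> supp_on T"
      by (auto simp: supp_on_def)
    show "(\<lambda>i. if i \<in> T then restrict x T i else 0) = x" if "x \<in> supp_on T" for x :: "nat \<Rightarrow> 'a"
      using that by (auto simp: supp_on_def)
    show "restrict (\<lambda>i. if i \<in> T then y i else 0) T = y" if "y \<in> PiE T (\<lambda>_. (UNIV::'a set))" for y
      using that by (auto simp: PiE_def extensional_def)
  qed
  then have "card (supp_on T :: (nat \<Rightarrow> 'a) set) = card (PiE T (\<lambda>_. (UNIV::'a set)))"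
    by (rule bij_betw_same_card)
  also have "\<dots> = CARD('a) ^ card T" using assms by (simp add: card_PiE)
  finally show ?thesis .
qed

lemma finite_supp_on:
  assumes "finite T"
  shows "finite (supp_on T :: (nat \<Rightarrow> 'a::{finite,field}) set)"
proof -
  have "supp_on T \<subseteq> (\<lambda>g i. if i \<in> T then g i else 0) ` (PiE T (\<lambda>_. (UNIV::'a set)))"
  proof
    fix f :: "nat \<Rightarrow> 'a" assume "f \<in> supp_on T"
    then have "f = (\<lambda>i. if i \<in> T then restrict f T i else 0)" by (auto simp: supp_on_def)
    then show "f \<in> (\<lambda>g i. if i \<in> T then g i else 0) ` (PiE T (\<lambda>_. (UNIV::'a set)))" by auto
  qed
  moreover have "finite (PiE T (\<lambda>_. (UNIV::'a set)))" using assms by (simp add: finite_PiE)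
  ultimately show ?thesis using finite_subset by blast
qed

lemma vecs_supp: "vecs n = supp_on {..<n}"
  by (auto simp: vecs_def supp_on_def)

lemma lc_add: "linear_code n C \<Longrightarrow> u \<in> C \<Longrightarrow> v \<in> C \<Longrightarrow> (\<lambda>i. u i + v i) \<in> C"
  unfolding linear_code_def by blast

lemma lc_smult: "linear_code n C \<Longrightarrow> u \<in> C \<Longrightarrow> (\<lambda>i. a * u i) \<in> C"
  unfolding linear_code_def by blast

lemma lc_zero: "linear_code n C \<Longrightarrow> (\<lambda>i. 0) \<in> C"
  unfolding linear_code_def by blast

lemma lc_sum:
  assumes "linear_code n C" "finite J" "\<forall>j\<in>J. f j \<in> C"
  shows "(\<lambda>i. \<Sum>j\<in>J. a j * f j i) \<in> C"
  using assms(2,3)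
proof (induction J rule: finite_induct)
  case empty then show ?case using lc_zero[OF assms(1)] by simp
next
  case (insert x F)
  have "(\<lambda>i. a x * f x i) \<in> C" using insert lc_smult[OF assms(1)] by simp
  moreover have "(\<lambda>i. \<Sum>j\<in>F. a j * f j i) \<in> C" using insert by simp
  ultimately have "(\<lambda>i. (\<lambda>i. a x * f x i) i + (\<lambda>i. \<Sum>j\<in>F. a j * f j i) i) \<in> C"
    by (rule lc_add[OF assms(1)])
  then show ?case using insert by simp
qed

lemma lc_diff:
  assumes "linear_code n C" "u \<in> C" "v \<in> C"
  shows "(\<lambda>i. u i - v i) \<in> C"
proof -
  have "(\<lambda>i. (-1) * v i) \<in> C" by (rule lc_smult[OF assms(1,3)])
  then have "(\<lambda>i. u i + (\<lambda>i. (-1) * v i) i) \<in> C" by (rule lc_add[OF assms(1,2)])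
  then show ?thesis by simp
qed

context
  fixes n k :: nat and C :: "(nat \<Rightarrow> 'a::{finite,field}) set"
  assumes lin: "linear_code n C" and dim: "code_dim C k"
    and mind: "min_dist n C = n - k + 1" and kn: "k \<le> n"
begin

lemma zero_on:
  assumes "c \<in> C" "K \<subseteq> {..<n}" "k \<le> card K" "\<forall>i\<in>K. c i = 0"
  shows "c = (\<lambda>i. 0)"
proof (rule ccontr)
  assume nz: "c \<noteq> (\<lambda>i. 0)"
  have "min_dist n C \<le> hweight n c"
    unfolding min_dist_def by (rule Least_le) (use assms nz in blast)
  moreover have "hweight n c \<le> card ({..<n} - K)"
    unfolding hweight_def by (rule card_mono) (use assms in auto)
  moreover have "card ({..<n} - K) = n - card K"
    using assms by (simp add: card_Diff_subset finite_subset)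
  moreover have "n - card K \<le> n - k" using assms(3) by (rule diff_le_mono2)
  ultimately have "n - k + 1 \<le> n - k" unfolding mind by (metis order_trans)
  then show False by simp
qed

lemma surj_on:
  assumes "K \<subseteq> {..<n}" "card K = k"
  shows "\<exists>c\<in>C. \<forall>i\<in>K. c i = x i"
proof -
  define p where "p = (\<lambda>(c::nat \<Rightarrow> 'a) i. if i \<in> K then c i else 0)"
  have fK: "finite K" using assms finite_subset by blast
  have inj: "inj_on p C"
  proof (rule inj_onI)
    fix u v assume uv: "u \<in> C" "v \<in> C" "p u = p v"
    have "\<forall>i\<in>K. u i - v i = 0"
    proof
      fix i assume "i \<in> K"
      then show "u i - v i = 0" using fun_cong[OF uv(3), of i] by (simp add: p_def)
    qed
    then have z: "(\<lambda>i. u i - v i) = (\<lambda>i. 0)"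
      using zero_on[OF lc_diff[OF lin uv(1,2)] assms(1)] assms(2) by simp
    show "u = v"
    proof
      fix i show "u i = v i" using fun_cong[OF z, of i] by simp
    qed
  qed
  have sub: "p ` C \<subseteq> supp_on K" by (auto simp: p_def supp_on_def)
  have "card (p ` C) = card C" using inj by (simp add: card_image)
  also have "\<dots> = CARD('a) ^ k" using dim by (simp add: code_dim_def)
  also have "\<dots> = card (supp_on K :: (nat \<Rightarrow> 'a) set)" using card_supp_on[OF fK, where 'a='a] assms by simp
  finally have "p ` C = supp_on K"
    using card_subset_eq[OF finite_supp_on[OF fK] sub] by simp
  moreover have "p x \<in> supp_on K" by (auto simp: p_def supp_on_def)
  ultimately obtain c where "c \<in> C" "p c = p x" by (metis imageE)
  then show ?thesis
  proof (intro bexI[of _ c] ballI)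
    fix i assume "i \<in> K"
    then show "c i = x i" using fun_cong[OF \<open>p c = p x\<close>, of i] by (simp add: p_def)
  qed
qed

end


context
  fixes n k :: nat and C :: "(nat \<Rightarrow> 'a::{finite,field}) set"
  assumes lin: "linear_code n C" and dim: "code_dim C k"
    and mind: "min_dist n C = n - k + 1" and kn: "k \<le> n"
begin

lemma row_exists:
  assumes T: "T \<subseteq> {..<n}" "card T = k + 1"
  shows "\<exists>h\<in>dual_code n C. \<forall>i. h i \<noteq> 0 \<longleftrightarrow> i \<in> T"
proof -
  have fT: "finite T" using T finite_subset by blast
  obtain j where j: "j \<in> T" using T by fastforce
  define T' where "T' = T - {j}"
  have T'sub: "T' \<subseteq> {..<n}" using T by (auto simp: T'_def)
  have cT': "card T' = k" using T j fT by (simp add: T'_def)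
  have fT': "finite T'" using fT by (simp add: T'_def)
  have jT': "j \<notin> T'" by (simp add: T'_def)
  have TT: "T = insert j T'" using j by (auto simp: T'_def)
  have "\<forall>i. \<exists>c. c \<in> C \<and> (\<forall>l\<in>T'. c l = (if l = i then 1 else 0))"
  proof
    fix i
    show "\<exists>c. c \<in> C \<and> (\<forall>l\<in>T'. c l = (if l = i then 1 else 0))"
      using surj_on[OF lin dim mind kn T'sub cT', where x="\<lambda>l. if l = i then 1 else 0"] by blast
  qed
  then obtain cc where cc: "\<And>i. cc i \<in> C" "\<And>i l. l \<in> T' \<Longrightarrow> cc i l = (if l = i then 1 else 0)"
    by metis
  define h where "h = (\<lambda>l. if l = j then 1 else if l \<in> T' then - cc l j else (0::'a))"
  have hsupp: "h i \<noteq> 0 \<longleftrightarrow> i \<in> T" for i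
  proof (cases "i = j")
    case True then show ?thesis using j by (simp add: h_def)
  next
    case False
    show ?thesis
    proof (cases "i \<in> T'")
      case False then show ?thesis using \<open>i \<noteq> j\<close> TT by (simp add: h_def)
    next
      case iT': True
      have "cc i j \<noteq> 0"
      proof
        assume z: "cc i j = 0"
        define K where "K = insert j (T' - {i})"
        have "K \<subseteq> {..<n}" using T'sub j T by (auto simp: K_def)
        moreover have "card K = k"
        proof -
          have "k > 0" using iT' cT' fT' card_gt_0_iff by blast
          then show ?thesis using iT' cT' fT' jT' by (simp add: K_def)
        qed
        moreover have "\<forall>l\<in>K. cc i l = 0" using z cc(2) by (auto simp: K_def)
        ultimately have "cc i = (\<lambda>l. 0)" using zero_on[OF lin dim mind kn cc(1)] by simp
        moreover have "cc i i = 1" using cc(2)[OF iT'] by simp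
        ultimately show False by simp
      qed
      then show ?thesis using iT' False TT by (simp add: h_def)
    qed
  qed
  have "h \<in> dual_code n C"
    unfolding dual_code_def
  proof (intro CollectI conjI ballI)
    show "h \<in> vecs n" unfolding vecs_def
    proof (intro CollectI allI impI)
      fix i assume "n \<le> i"
      then have "i \<notin> T" using T by auto
      then show "h i = 0" using hsupp by blast
    qed
    fix c assume c: "c \<in> C"
    define c' where "c' = (\<lambda>i. \<Sum>l\<in>T'. c l * cc l i)"
    have c'C: "c' \<in> C" unfolding c'_def by (rule lc_sum[OF lin fT']) (use cc in auto)
    have agree: "c' i = c i" if "i \<in> T'" for i
    proof -
      have "c' i = (\<Sum>l\<in>T'. c l * (if i = l then 1 else 0))"
        unfolding c'_def using cc(2)[OF that] by (intro sum.cong) auto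
      also have "\<dots> = (\<Sum>l\<in>T'. if i = l then c l else 0)" by (intro sum.cong) auto
      also have "\<dots> = c i" using that fT' by (simp add: sum.delta)
      finally show ?thesis .
    qed
    have "(\<lambda>i. c' i - c i) = (\<lambda>l. 0)"
      using zero_on[OF lin dim mind kn lc_diff[OF lin c'C c] T'sub] cT' agree by simp
    then have cj: "c j = (\<Sum>l\<in>T'. c l * cc l j)"
      using fun_cong[of "\<lambda>i. c' i - c i" "\<lambda>l. 0" j] by (simp add: c'_def)
    have "(\<Sum>i<n. h i * c i) = (\<Sum>i\<in>T. h i * c i)"
      by (rule sum.mono_neutral_right) (use T hsupp in auto)
    also have "\<dots> = c j + (\<Sum>i\<in>T'. h i * c i)" using TT fT' jT' by (simp add: h_def)
    also have "(\<Sum>i\<in>T'. h i * c i) = (\<Sum>i\<in>T'. - (c i * cc i j))"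
      using jT' by (intro sum.cong) (auto simp: h_def)
    also have "c j + \<dots> = 0" using cj by (simp add: sum_negf)
    finally show "(\<Sum>i<n. h i * c i) = 0" .
  qed
  then show ?thesis using hsupp by blast
qed

lemma dual_zero_on:
  assumes v: "v \<in> dual_code n C" and U: "U \<subseteq> {..<n}" "card U = n - k" and z: "\<forall>i\<in>U. v i = 0"
  shows "v = (\<lambda>i. 0)"
proof
  fix i
  show "v i = 0"
  proof (cases "i < n \<and> i \<notin> U")
    case False
    then show ?thesis using v z unfolding dual_code_def vecs_def by auto
  next
    case True
    define T' where "T' = {..<n} - U"
    have T'sub: "T' \<subseteq> {..<n}" by (auto simp: T'_def)
    have cT': "card T' = k" using U kn by (simp add: T'_def card_Diff_subset finite_subset)
    obtain c where c: "c \<in> C" "\<forall>l\<in>T'. c l = (if l = i then 1 else 0)"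
      using surj_on[OF lin dim mind kn T'sub cT', where x="\<lambda>l. if l = i then 1 else 0"] by blast
    have iT': "i \<in> T'" using True by (auto simp: T'_def)
    have "0 = (\<Sum>l<n. v l * c l)" using v c(1) unfolding dual_code_def by auto
    also have "\<dots> = (\<Sum>l\<in>{i}. v l * c l)"
    proof -
      have zero: "\<forall>l\<in>{..<n} - {i}. v l * c l = 0"
      proof
        fix l assume l: "l \<in> {..<n} - {i}"
        show "v l * c l = 0"
        proof (cases "l \<in> U")
          case True then show ?thesis using z by simp
        next
          case False then have "l \<in> T'" using l by (simp add: T'_def)
          then show ?thesis using c(2) l by simp
        qed
      qed
      have "(\<Sum>l\<in>{i}. v l * c l) = (\<Sum>l<n. v l * c l)"
        by (rule sum.mono_neutral_left) (use True zero in auto)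
      then show ?thesis by simp
    qed
    also have "\<dots> = v i" using c(2) iT' by simp
    finally show ?thesis by simp
  qed
qed

end

lemma span_local:
  assumes "finite S" "\<forall>S'. S' \<subseteq> S \<longrightarrow> S' \<noteq> {} \<longrightarrow> has_single_row H S'"
  shows "\<exists>a. \<forall>i\<in>S. (\<Sum>j<length H. a j * (H!j) i) = (x i :: 'a::field)"
  using assms
proof (induction "card S" arbitrary: S rule: less_induct)
  case less
  show ?case
  proof (cases "S = {}")
    case True then show ?thesis by simp
  next
    case False
    then obtain h where h: "h \<in> set H" "card {i\<in>S. h i \<noteq> 0} = 1"
      using less.prems unfolding has_single_row_def by blast
    then obtain s where s: "{i\<in>S. h i \<noteq> 0} = {s}" using card_1_singletonE by blast
    obtain j0 where j0: "j0 < length H" "H ! j0 = h" using h(1) by (metis in_set_conv_nth)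
    have sS: "s \<in> S" "h s \<noteq> 0" using s by auto
    have hz: "\<And>i. i \<in> S \<Longrightarrow> i \<noteq> s \<Longrightarrow> h i = 0" using s by auto
    have "card S > 0" using sS less.prems(1) card_gt_0_iff by blast
    then have "card (S - {s}) < card S" using sS less.prems(1) by simp
    moreover have "finite (S - {s})" using less.prems by simp
    moreover have "\<forall>S'. S' \<subseteq> S - {s} \<longrightarrow> S' \<noteq> {} \<longrightarrow> has_single_row H S'"
      using less.prems by blast
    ultimately obtain a where a: "\<forall>i\<in>S - {s}. (\<Sum>j<length H. a j * (H!j) i) = x i"
      using less.hyps by blast
    define t where "t = (x s - (\<Sum>j<length H. a j * (H!j) s)) / h s"
    define a' where "a' = (\<lambda>j. a j + (if j = j0 then t else 0))"
    have eq: "(\<Sum>j<length H. a' j * (H!j) i) = (\<Sum>j<length H. a j * (H!j) i) + t * h i" for i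
    proof -
      have "(\<Sum>j<length H. a' j * (H!j) i) = (\<Sum>j<length H. a j * (H!j) i + (if j = j0 then t * (H!j) i else 0))"
        unfolding a'_def by (intro sum.cong) (auto simp: distrib_right)
      also have "\<dots> = (\<Sum>j<length H. a j * (H!j) i) + t * h i"
        using j0 by (simp add: sum.distrib)
      finally show ?thesis .
    qed
    have "\<forall>i\<in>S. (\<Sum>j<length H. a' j * (H!j) i) = x i"
    proof
      fix i assume i: "i \<in> S"
      show "(\<Sum>j<length H. a' j * (H!j) i) = x i"
      proof (cases "i = s")
        case True then show ?thesis using eq sS by (simp add: t_def)
      next
        case False then show ?thesis using eq hz[OF i False] a i by simp
      qed
    qed
    then show ?thesis by blast
  qed
qed



lemma row_span_sub:
  assumes H: "set H \<subseteq> dual_code n C"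
  shows "row_span H \<subseteq> dual_code n C"
proof
  fix r assume "r \<in> row_span H"
  then obtain a where r: "r = (\<lambda>i. \<Sum>j<length H. a j * (H ! j) i)" unfolding row_span_def by blast
  have Hj: "H ! j \<in> dual_code n C" if "j < length H" for j using H that by auto
  show "r \<in> dual_code n C" unfolding dual_code_def
  proof (intro CollectI conjI ballI)
    show "r \<in> vecs n" unfolding vecs_def
    proof (intro CollectI allI impI)
      fix i assume "n \<le> i"
      then have "\<forall>j<length H. (H ! j) i = 0" using Hj unfolding dual_code_def vecs_def by blast
      then show "r i = 0" unfolding r by simp
    qed
    fix c assume c: "c \<in> C"
    have "(\<Sum>i<n. r i * c i) = (\<Sum>i<n. \<Sum>j<length H. a j * ((H ! j) i * c i))"
      unfolding r by (simp add: sum_distrib_right mult.assoc)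
    also have "\<dots> = (\<Sum>j<length H. a j * (\<Sum>i<n. (H ! j) i * c i))"
      by (subst sum.swap) (simp add: sum_distrib_left)
    also have "\<dots> = 0" using Hj c unfolding dual_code_def by simp
    finally show "(\<Sum>i<n. r i * c i) = 0" .
  qed
qed

context
  fixes n k :: nat and C :: "(nat \<Rightarrow> 'a::{finite,field}) set"
  assumes lin: "linear_code n C" and dim: "code_dim C k"
    and mind: "min_dist n C = n - k + 1" and kn: "k \<le> n"
begin

lemma span_full:
  assumes H: "set H \<subseteq> dual_code n C" and U: "U \<subseteq> {..<n}" "card U = n - k"
    and st: "\<forall>S'. S' \<subseteq> U \<longrightarrow> S' \<noteq> {} \<longrightarrow> has_single_row H S'"
  shows "row_span H = dual_code n C"
proof
  show "row_span H \<subseteq> dual_code n C" by (rule row_span_sub[OF H])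
  show "dual_code n C \<subseteq> row_span H"
  proof
    fix v assume v: "v \<in> dual_code n C"
    have fU: "finite U" using U finite_subset by blast
    obtain a where a: "\<forall>i\<in>U. (\<Sum>j<length H. a j * (H!j) i) = v i"
      using span_local[OF fU st] by blast
    define r where "r = (\<lambda>i. \<Sum>j<length H. a j * (H!j) i)"
    have rR: "r \<in> row_span H" unfolding r_def row_span_def by blast
    then have rD: "r \<in> dual_code n C" using row_span_sub[OF H] by blast
    have wD: "(\<lambda>i. v i - r i) \<in> dual_code n C"
      unfolding dual_code_def
    proof (intro CollectI conjI ballI)
      show "(\<lambda>i. v i - r i) \<in> vecs n" using v rD unfolding dual_code_def vecs_def by auto
      fix c assume c: "c \<in> C"
      have "(\<Sum>i<n. (v i - r i) * c i) = (\<Sum>i<n. v i * c i) - (\<Sum>i<n. r i * c i)"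
        by (simp add: left_diff_distrib sum_subtractf)
      also have "\<dots> = 0" using v rD c unfolding dual_code_def by simp
      finally show "(\<Sum>i<n. (v i - r i) * c i) = 0" .
    qed
    have "\<forall>i\<in>U. v i - r i = 0" using a by (simp add: r_def)
    then have "(\<lambda>i. v i - r i) = (\<lambda>i. 0)"
      using dual_zero_on[OF lin dim mind kn wD U] by simp
    then have "v = r"
    proof -
      assume z: "(\<lambda>i. v i - r i) = (\<lambda>i. 0)"
      show "v = r"
      proof
        fix i show "v i = r i" using fun_cong[OF z, of i] by simp
      qed
    qed
    then show "v \<in> row_span H" using rR by simp
  qed
qed

end

lemma stop_eq:
  assumes H: "set H \<subseteq> dual_code n C" and ex: "\<exists>c\<in>C. c \<noteq> (\<lambda>i. 0)"
    and d: "min_dist n C = d" "d \<ge> 1"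
    and P: "\<forall>S. S \<subseteq> {..<n} \<and> S \<noteq> {} \<and> card S \<le> d - 1 \<longrightarrow> has_single_row H S"
  shows "stopping_distance n H = d"
  unfolding stopping_distance_def
proof (rule Greatest_equality)
  show "\<forall>S. S \<subseteq> {..<n} \<and> S \<noteq> {} \<and> card S \<le> d - 1 \<longrightarrow> has_single_row H S" by (rule P)
  fix y assume Py: "\<forall>S. S \<subseteq> {..<n} \<and> S \<noteq> {} \<and> card S \<le> y - 1 \<longrightarrow> has_single_row H S"
  show "y \<le> d"
  proof (rule ccontr)
    assume "\<not> y \<le> d"
    have "\<exists>w. \<exists>c\<in>C. c \<noteq> (\<lambda>i. 0) \<and> hweight n c = w" using ex by blast
    then have "\<exists>c\<in>C. c \<noteq> (\<lambda>i. 0) \<and> hweight n c = min_dist n C"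
      unfolding min_dist_def by (rule LeastI_ex)
    then obtain c where c: "c \<in> C" "hweight n c = d" using d by blast
    define S where "S = {i. i < n \<and> c i \<noteq> 0}"
    have cS: "card S = d" using c by (simp add: S_def hweight_def)
    have "S \<noteq> {}" using cS d by auto
    moreover have "S \<subseteq> {..<n}" by (auto simp: S_def)
    moreover have "card S \<le> y - 1" using cS \<open>\<not> y \<le> d\<close> by simp
    ultimately have "has_single_row H S" using Py by blast
    then obtain h where h: "h \<in> set H" "card {i\<in>S. h i \<noteq> 0} = 1" unfolding has_single_row_def by blast
    then obtain s where s: "{i\<in>S. h i \<noteq> 0} = {s}" using card_1_singletonE by blast
    have hD: "h \<in> dual_code n C" using h H by auto
    have zero: "\<forall>i\<in>{..<n} - {s}. h i * c i = 0"
    proof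
      fix i assume i: "i \<in> {..<n} - {s}"
      show "h i * c i = 0"
      proof (cases "c i = 0")
        case False then have "i \<in> S" using i by (simp add: S_def)
        then have "h i = 0" using s i by blast
        then show ?thesis by simp
      qed simp
    qed
    have sn: "s < n" "h s \<noteq> 0" "c s \<noteq> 0" using s by (auto simp: S_def)
    have "(\<Sum>i\<in>{s}. h i * c i) = (\<Sum>i<n. h i * c i)"
      by (rule sum.mono_neutral_left) (use sn zero in auto)
    also have "\<dots> = 0" using hD c unfolding dual_code_def by simp
    finally show False using sn by simp
  qed
qed

lemma red_le:
  assumes "set H \<subseteq> dual_code n C" "row_span H = dual_code n C" "stopping_distance n H = min_dist n C"
  shows "stopping_redundancy n C \<le> length H"
proof -
  have "parity_check n C H" using assms unfolding parity_check_def dual_code_def by blast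
  then show ?thesis unfolding stopping_redundancy_def by (intro Least_le) (use assms in blast)
qed



theorem corollary20:
  fixes C :: "(nat \<Rightarrow> 'a::{finite,field}) set" and n k d :: nat
  assumes "linear_code n C"
    and "code_dim C k"
    and "\<exists>c\<in>C. c \<noteq> (\<lambda>i. 0)"
    and "min_dist n C = d"
    and "d = n - k + 1"
  shows "real (stopping_redundancy n C)
     \<le> real (max (n - d + 2) (d - 1)) / real n * real (if 2 \<le> d then n choose (d - 2) else 0)"
proof -
  note lin = assms(1) and dim = assms(2) and ex = assms(3)
  have mind: "min_dist n C = n - k + 1" using assms(4,5) by simp
  obtain c0 where c0: "c0 \<in> C" "c0 \<noteq> (\<lambda>i. 0)" using ex by blast
  have CV: "C \<subseteq> vecs n" using lin by (simp add: linear_code_def)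
  have n1: "n \<ge> 1"
  proof (rule ccontr)
    assume "\<not> n \<ge> 1" then have "n = 0" by simp
    then have "c0 = (\<lambda>i. 0)" using CV c0(1) unfolding vecs_def by auto
    then show False using c0 by simp
  qed
  have kn: "k \<le> n"
  proof -
    have fin: "finite (vecs n :: (nat \<Rightarrow> 'a) set)"
      using finite_supp_on[of "{..<n}", where 'a='a] by (simp add: vecs_supp)
    have "card C \<le> card (vecs n :: (nat \<Rightarrow> 'a) set)" by (rule card_mono[OF fin CV])
    also have "\<dots> = CARD('a) ^ n" using card_supp_on[of "{..<n}", where 'a='a] by (simp add: vecs_supp)
    finally have "CARD('a) ^ k \<le> CARD('a) ^ n" using dim by (simp add: code_dim_def)
    moreover have "CARD('a) > 1"
    proof -
      have "card {0::'a, 1} \<le> CARD('a)" by (rule card_mono) auto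
      then show ?thesis by simp
    qed
    ultimately show ?thesis using power_le_imp_le_exp by blast
  qed
  have dn: "d \<le> n"
  proof -
    have "min_dist n C \<le> hweight n c0"
      unfolding min_dist_def by (rule Least_le) (use c0 in blast)
    moreover have "hweight n c0 \<le> n" unfolding hweight_def
      by (rule order_trans[OF card_mono[of "{..<n}"]]) auto
    ultimately show ?thesis using assms(4) by simp
  qed
  have d1: "d \<ge> 1" using assms(5) by simp
  have RHS0: "0 \<le> real (max (n - d + 2) (d - 1)) / real n * real (if 2 \<le> d then n choose (d - 2) else 0)"
    by simp
  show ?thesis
  proof (cases "d = 1")
    case True
    have kn': "k = n" using True assms(5) kn by simp
    have "row_span ([] :: (nat \<Rightarrow> 'a) list) = dual_code n C"
      by (rule span_full[OF lin dim mind kn, of "([] :: (nat \<Rightarrow> 'a) list)" "{}"]) (use kn' in auto)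
    moreover have "stopping_distance n ([] :: (nat \<Rightarrow> 'a) list) = d"
    proof -
      have P0: "\<forall>S. S \<subseteq> {..<n} \<and> S \<noteq> {} \<and> card S \<le> d - 1 \<longrightarrow> has_single_row ([] :: (nat \<Rightarrow> 'a) list) S"
        using True by (auto dest: finite_subset)
      show ?thesis using stop_eq[OF _ ex assms(4) d1 P0] by simp
    qed
    ultimately have "stopping_redundancy n C \<le> length ([] :: (nat \<Rightarrow> 'a) list)"
      using red_le[of "[] :: (nat \<Rightarrow> 'a) list" n C] assms(4) by simp
    then show ?thesis using RHS0 by simp
  next
    case False
    then have d2: "d \<ge> 2" using d1 by simp
    define F where "F = {Z. Z \<subseteq> {..<n-1} \<and> card Z = d - 2}"
    have fF: "finite F" unfolding F_def by (rule finite_subset[of _ "Pow {..<n-1}"]) auto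
    have cF: "card F = (n - 1) choose (d - 2)" unfolding F_def using n_subsets[of "{..<n-1}" "d-2"] by simp
    obtain xs where xs: "set xs = F" "distinct xs" using finite_distinct_list[OF fF] by blast
    define hf where "hf = (\<lambda>Z. SOME h. h \<in> dual_code n C \<and> (\<forall>i. h i \<noteq> 0 \<longleftrightarrow> i \<in> {..<n} - Z))"
    have hf: "hf Z \<in> dual_code n C \<and> (\<forall>i. hf Z i \<noteq> 0 \<longleftrightarrow> i \<in> {..<n} - Z)" if "Z \<in> F" for Z
    proof -
      have Zs: "Z \<subseteq> {..<n}" "card Z = d - 2" using that by (auto simp: F_def)
      have "card ({..<n} - Z) = n - (d - 2)" using Zs by (simp add: card_Diff_subset finite_subset)
      also have "\<dots> = k + 1" using assms(5) d2 kn by simp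
      finally have cT: "card ({..<n} - Z) = k + 1" .
      have sub: "{..<n} - Z \<subseteq> {..<n}" by blast
      have "\<exists>h\<in>dual_code n C. \<forall>i. h i \<noteq> 0 \<longleftrightarrow> i \<in> {..<n} - Z"
        by (rule row_exists[OF lin dim mind kn sub cT])
      then have "\<exists>h. h \<in> dual_code n C \<and> (\<forall>i. h i \<noteq> 0 \<longleftrightarrow> i \<in> {..<n} - Z)" by blast
      then show ?thesis unfolding hf_def by (rule someI_ex)
    qed
    define H where "H = map hf xs"
    have HD: "set H \<subseteq> dual_code n C" using hf xs by (auto simp: H_def)
    have lenH: "length H = (n - 1) choose (d - 2)"
      using cF xs distinct_card[OF xs(2)] by (simp add: H_def)
    have P: "\<forall>S. S \<subseteq> {..<n} \<and> S \<noteq> {} \<and> card S \<le> d - 1 \<longrightarrow> has_single_row H S"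
    proof (intro allI impI)
      fix S assume S: "S \<subseteq> {..<n} \<and> S \<noteq> {} \<and> card S \<le> d - 1"
      have fS: "finite S" using S finite_subset by blast
      define s where "s = (if n - 1 \<in> S then n - 1 else (SOME s. s \<in> S))"
      have sS: "s \<in> S" using S unfolding s_def by (auto intro: someI_ex)
      define A where "A = {..<n-1} - {s}"
      have S'A: "S - {s} \<subseteq> A"
      proof
        fix i assume i: "i \<in> S - {s}"
        then have "i < n" using S by auto
        moreover have "i \<noteq> n - 1" using i unfolding s_def by (cases "n - 1 \<in> S") auto
        ultimately show "i \<in> A" using i by (auto simp: A_def)
      qed
      have c1: "card S \<le> d - 1" using S by blast
      have "card (S - {s}) = card S - 1" using sS fS by simp
      then have cS': "card (S - {s}) \<le> d - 2" using c1 by linarith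
      have "card A \<ge> n - 2"
      proof -
        have "card A \<ge> card {..<n-1} - card {s}" unfolding A_def by (rule diff_card_le_card_Diff) simp
        then show ?thesis by simp
      qed
      then have "d - 2 \<le> card A" using dn by simp
      then obtain Z where Z: "S - {s} \<subseteq> Z" "Z \<subseteq> A" "card Z = d - 2"
        using exists_subset_between[OF cS' _ S'A] by (auto simp: A_def)
      have ZF: "Z \<in> F" using Z by (auto simp: F_def A_def)
      have "hf Z \<in> set H" using ZF xs by (simp add: H_def)
      moreover have "{i\<in>S. hf Z i \<noteq> 0} = {s}"
      proof -
        have "{i\<in>S. hf Z i \<noteq> 0} = {i\<in>S. i \<in> {..<n} - Z}" using hf[OF ZF] by blast
        also have "\<dots> = {s}" using Z sS S by (auto simp: A_def)
        finally show ?thesis .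
      qed
      ultimately show "has_single_row H S" unfolding has_single_row_def
        by (intro bexI[of _ "hf Z"]) simp_all
    qed
    have span: "row_span H = dual_code n C"
    proof (rule span_full[OF lin dim mind kn HD, of "{..<n-k}"])
      show "\<forall>S'. S' \<subseteq> {..<n - k} \<longrightarrow> S' \<noteq> {} \<longrightarrow> has_single_row H S'"
      proof (intro allI impI)
        fix S' assume S': "S' \<subseteq> {..<n - k}" "S' \<noteq> {}"
        have "card S' \<le> n - k" using S' card_mono[of "{..<n-k}" S'] by simp
        moreover have "S' \<subseteq> {..<n}" using S' by auto
        ultimately show "has_single_row H S'" using P S'(2) assms(5) by simp
      qed
    qed auto
    have sd: "stopping_distance n H = d" by (rule stop_eq[OF HD ex assms(4) d1 P])
    have "stopping_redundancy n C \<le> length H" using red_le[OF HD span] sd assms(4) by simp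
    then have "real (stopping_redundancy n C) \<le> real ((n - 1) choose (d - 2))" using lenH by simp
    also have "\<dots> = real (n - (d - 2)) * real (n choose (d - 2)) / real n"
    proof -
      have "(n - (d - 2)) * (n choose (d - 2)) = n * ((n - 1) choose (d - 2))"
        by (rule binomial_absorb_comp)
      then have "real (n - (d - 2)) * real (n choose (d - 2)) = real n * real ((n - 1) choose (d - 2))"
        by (metis of_nat_mult)
      then show ?thesis using n1 by (simp add: field_simps)
    qed
    also have "\<dots> \<le> real (max (n - d + 2) (d - 1)) * real (n choose (d - 2)) / real n"
    proof -
      have "n - (d - 2) = n - d + 2" using d2 dn by simp
      then have "real (n - (d - 2)) \<le> real (max (n - d + 2) (d - 1))" by simp
      then show ?thesis using n1 by (intro divide_right_mono mult_right_mono) auto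
    qed
    also have "\<dots> = real (max (n - d + 2) (d - 1)) / real n * real (if 2 \<le> d then n choose (d - 2) else 0)"
      using d2 by simp
    finally show ?thesis .
  qed
qed


end
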